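(* Let $\mathbf{X}\subset\mathbb{R}^d$ be a finite set with more than $k$ distinct points, let $\ell>k$, and let $T$ be a positive integer with $T\ge\ln\big(\mathbb{E}[\mathrm{cost}(\mathbf{X},C_1)]/\mathrm{OPT}_k(\mathbf{X})\big)$. Then after $T$ rounds of the $k$-means$\parallel$ seeding algorithm with parameter $\ell$, the expected cost satisfies $\mathbb{E}[\mathrm{cost}(\mathbf{X},C_{T+1})]\le9\,\mathrm{OPT}_k(\mathbf{X})$.
   Context: For a finite $C\subset\mathbb{R}^d$, $\mathrm{cost}(x,C)=\min_{c\in C}\|x-c\|^2$, $\mathrm{cost}(\mathbf{Y},C)=\sum_{x\in\mathbf{Y}}\mathrm{cost}(x,C)$, $\mathrm{OPT}_k(\mathbf{X})=\min_{|C|=k}\mathrm{cost}(\mathbf{X},C)$. The $k$-means$\parallel$ seeding algorithm with parameter $\ell$: choose $c$ uniformly at random from $\mathbf{X}$, $C_1=\{c\}$; in round $t=1,2,\dots$, let $\lambda_t(x)=\ell\,\mathrm{cost}(x,C_t)/\mathrm{cost}(\mathbf{X},C_t)$, include each $x\in\mathbf{X}$ in a set $C'$ independently with probability $\min\{1,\lambda_t(x)\}$, and set $C_{t+1}=C_t\cup C'$. The set after $T$ rounds is $C_{T+1}$. *)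

theory Defs
  imports "HOL-Analysis.Analysis" "HOL-Probability.Probability"
begin

definition pcost :: "'a::euclidean_space \<Rightarrow> 'a set \<Rightarrow> real" where
  "pcost x C = Min ((\<lambda>c. (norm (x - c))^2) ` C)"

definition setcost :: "'a::euclidean_space set \<Rightarrow> 'a set \<Rightarrow> real" where
  "setcost Y C = (\<Sum>x\<in>Y. pcost x C)"

definition OPT :: "nat \<Rightarrow> 'a::euclidean_space set \<Rightarrow> real" where
  "OPT k X = Inf {setcost X C | C. finite C \<and> card C = k}"

definition kmpar_init :: "'a::euclidean_space set \<Rightarrow> 'a set pmf" where
  "kmpar_init X = map_pmf (\<lambda>c. {c}) (pmf_of_set X)"

definition kmpar_round :: "real \<Rightarrow> 'a::euclidean_space set \<Rightarrow> 'a set \<Rightarrow> 'a set pmf" where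
  "kmpar_round l X C =
     map_pmf (\<lambda>f. C \<union> {x\<in>X. f x})
       (Pi_pmf X False (\<lambda>x. bernoulli_pmf (min 1 (l * pcost x C / setcost X C))))"

text \<open>kmpar_seed l X t is the distribution of C_{t+1}, the centre set after t rounds.\<close>
fun kmpar_seed :: "real \<Rightarrow> 'a::euclidean_space set \<Rightarrow> nat \<Rightarrow> 'a set pmf" where
  "kmpar_seed l X 0 = kmpar_init X"
| "kmpar_seed l X (Suc t) = bind_pmf (kmpar_seed l X t) (kmpar_round l X)"

end

theory Submission
  imports Defs
begin

lemma key_ineq:
  fixes a b s :: real
  assumes "0 \<le> s" "s \<le> a" "s \<le> b"
  shows "(a+b)^2 * (min (a^2) (b^2) - s^2) \<le> 4*a^2*(b^2 - s^2)"
proof (cases "b \<le> a")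
  case True
  then have m: "min (a^2) (b^2) = b^2" using assms by (simp add: power_mono min_def)
  have "(a+b)^2 \<le> (2*a)^2" using True assms by (intro power_mono) auto
  then have 1: "(a+b)^2 \<le> 4*a^2" by (simp add: power_mult_distrib)
  have 2: "0 \<le> b^2 - s^2" using assms power_mono[of s b 2] by auto
  show ?thesis unfolding m using mult_right_mono[OF 1 2] by simp
next
  case False
  then have m: "min (a^2) (b^2) = a^2" using assms by (simp add: power_mono min_def)
  have e: "4*a^2*(b^2 - s^2) - (a+b)^2*(a^2 - s^2) = a^2*(b-a)*(3*b+a) + s^2*(b-a)*(b+3*a)"
    by (simp add: algebra_simps power2_eq_square)
  have "0 \<le> a^2*(b-a)*(3*b+a) + s^2*(b-a)*(b+3*a)" using False assms by (intro add_nonneg_nonneg mult_nonneg_nonneg) auto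
  then show ?thesis unfolding m using e by linarith
qed


lemma pcost_le: "finite C \<Longrightarrow> c \<in> C \<Longrightarrow> pcost x C \<le> (norm (x - c))^2"
  unfolding pcost_def by (rule Min_le) auto

lemma pcost_ex: "finite C \<Longrightarrow> C \<noteq> {} \<Longrightarrow> \<exists>c\<in>C. pcost x C = (norm (x - c))^2"
proof -
  assume "finite C" "C \<noteq> {}"
  then have "pcost x C \<in> (\<lambda>c. (norm (x - c))^2) ` C" unfolding pcost_def by (intro Min_in) auto
  then show ?thesis by auto
qed

lemma pcost_nonneg: "finite C \<Longrightarrow> C \<noteq> {} \<Longrightarrow> 0 \<le> pcost x C"
  using pcost_ex[of C x] by auto

lemma pcost_mono: "finite C' \<Longrightarrow> C \<subseteq> C' \<Longrightarrow> C \<noteq> {} \<Longrightarrow> pcost x C' \<le> pcost x C"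
  unfolding pcost_def by (rule Min_antimono) auto

lemma pcost_lip:
  assumes "finite C" "C \<noteq> {}"
  shows "sqrt (pcost x C) \<le> sqrt (pcost z C) + norm (x - z)"
proof -
  obtain c where c: "c \<in> C" "pcost z C = (norm (z - c))^2" using pcost_ex[OF assms] by blast
  have "sqrt (pcost x C) \<le> sqrt ((norm (x - c))^2)" by (rule real_sqrt_le_mono, rule pcost_le[OF assms(1) c(1)])
  also have "\<dots> = norm (x - c)" by simp
  also have "\<dots> \<le> norm (x - z) + norm (z - c)" using norm_triangle_ineq[of "x - z" "z - c"] by simp
  finally show ?thesis using c(2) by simp
qed

lemma pcost_sq:
  assumes "finite C" "C \<noteq> {}"
  shows "pcost x C \<le> (sqrt (pcost z C) + norm (x - z))^2"
proof -
  have "sqrt (pcost x C) ^2 \<le> (sqrt (pcost z C) + norm (x - z))^2"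
    using pcost_lip[OF assms, of x z] pcost_nonneg[OF assms, of x] by (intro power_mono) auto
  then show ?thesis using pcost_nonneg[OF assms, of x] by simp
qed

lemma sum_sqdist:
  fixes P :: "'a::euclidean_space set"
  assumes "finite P"
  shows "(\<Sum>z\<in>P. (norm (y - z))^2) = real (card P) * (y \<bullet> y) - 2 * (y \<bullet> (\<Sum>P)) + (\<Sum>z\<in>P. z \<bullet> z)"
proof -
  have "(\<Sum>z\<in>P. (norm (y - z))^2) = (\<Sum>z\<in>P. y \<bullet> y - 2 * (y \<bullet> z) + z \<bullet> z)"
    by (intro sum.cong refl) (simp add: power2_norm_eq_inner inner_diff_left inner_diff_right inner_commute)
  also have "\<dots> = real (card P) * (y \<bullet> y) - 2 * (y \<bullet> (\<Sum>P)) + (\<Sum>z\<in>P. z \<bullet> z)"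
    by (simp add: sum.distrib sum_subtractf inner_sum_right sum_distrib_left)
  finally show ?thesis .
qed

lemma mean_decomp:
  fixes P :: "'a::euclidean_space set"
  assumes "finite P" "P \<noteq> {}"
  defines "\<mu> \<equiv> (1 / real (card P)) *\<^sub>R (\<Sum>P)"
  shows "(\<Sum>z\<in>P. (norm (y - z))^2) = real (card P) * (norm (y - \<mu>))^2 + (\<Sum>z\<in>P. (norm (z - \<mu>))^2)"
proof -
  let ?n = "real (card P)"
  have n: "?n > 0" using assms by (simp add: card_gt_0_iff)
  have S: "\<Sum>P = ?n *\<^sub>R \<mu>" using n unfolding \<mu>_def by simp
  have "(\<Sum>z\<in>P. (norm (z - \<mu>))^2) = (\<Sum>z\<in>P. (norm (\<mu> - z))^2)" by (simp add: norm_minus_commute)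
  also have "\<dots> = ?n * (\<mu> \<bullet> \<mu>) - 2 * (\<mu> \<bullet> (\<Sum>P)) + (\<Sum>z\<in>P. z \<bullet> z)" by (rule sum_sqdist[OF assms(1)])
  finally have 1: "(\<Sum>z\<in>P. (norm (z - \<mu>))^2) = ?n * (\<mu> \<bullet> \<mu>) - 2 * (\<mu> \<bullet> (\<Sum>P)) + (\<Sum>z\<in>P. z \<bullet> z)" .
  show ?thesis unfolding sum_sqdist[OF assms(1)] 1 S
    by (simp add: power2_norm_eq_inner inner_diff_left inner_diff_right inner_commute algebra_simps)
qed



lemma five:
  fixes P C :: "'a::euclidean_space set"
  assumes P: "finite P" and C: "finite C" "C \<noteq> {}"
  shows "(\<Sum>x\<in>P. pcost x C * (\<Sum>y\<in>P. min (pcost y C) ((norm (y - x))^2)))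
           \<le> 5 * (\<Sum>y\<in>P. (norm (y - c))^2) * (\<Sum>x\<in>P. pcost x C)"
proof (cases "P = {}")
  case True then show ?thesis by simp
next
  case Pne: False
  define n where "n = real (card P)"
  have n: "n > 0" using P Pne by (simp add: n_def card_gt_0_iff)
  define \<mu> where "\<mu> = (1 / real (card P)) *\<^sub>R (\<Sum>P)"
  define S where "S = (\<Sum>z\<in>P. (norm (z - \<mu>))^2)"
  define A where "A = (\<Sum>x\<in>P. pcost x C)"
  define B where "B x = (\<Sum>z\<in>P. (norm (x - z))^2)" for x
  define d where "d x = pcost x C" for x
  define g where "g x = (\<Sum>y\<in>P. min (pcost y C) ((norm (y - x))^2))" for x
  have d0: "0 \<le> d x" for x using pcost_nonneg[OF C] by (simp add: d_def)
  have A0: "0 \<le> A" unfolding A_def using d0 by (simp add: d_def sum_nonneg)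
  have S0: "0 \<le> S" unfolding S_def by (simp add: sum_nonneg)
  have Bdec: "B x = n * (norm (x - \<mu>))^2 + S" for x
    unfolding B_def S_def n_def \<mu>_def by (rule mean_decomp[OF P Pne])
  have SB: "S \<le> B x" for x using Bdec[of x] n by (simp add: add_nonneg_nonneg)
  have Sc: "S \<le> (\<Sum>y\<in>P. (norm (y - c))^2)"
  proof -
    have "(\<Sum>y\<in>P. (norm (y - c))^2) = B c" unfolding B_def by (simp add: norm_minus_commute)
    then show ?thesis using SB by simp
  qed
  have sumB: "(\<Sum>x\<in>P. B x) = 2 * n * S"
  proof -
    have "(\<Sum>x\<in>P. B x) = (\<Sum>x\<in>P. n * (norm (x - \<mu>))^2 + S)" using Bdec by simp
    also have "\<dots> = n * S + n * S" by (simp add: sum.distrib sum_distrib_left[symmetric] S_def n_def)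
    finally show ?thesis by simp
  qed
  have gA: "g x \<le> A" for x unfolding g_def A_def by (intro sum_mono) simp
  have gB: "g x \<le> B x" for x unfolding g_def B_def by (intro sum_mono) (simp add: norm_minus_commute)
  have g0: "0 \<le> g x" for x unfolding g_def using pcost_nonneg[OF C] by (intro sum_nonneg) simp
  have nd: "n * d x \<le> (sqrt A + sqrt (B x))^2" for x
  proof -
    have "n * d x = (\<Sum>z\<in>P. d x)" by (simp add: n_def)
    also have "\<dots> \<le> (\<Sum>z\<in>P. (sqrt (d z) + norm (x - z))^2)"
      by (intro sum_mono) (simp add: d_def pcost_sq[OF C])
    also have "\<dots> = (L2_set (\<lambda>z. sqrt (d z) + norm (x - z)) P)^2"
    proof -
      have "0 \<le> (\<Sum>z\<in>P. (sqrt (d z) + norm (x - z))^2)" by (intro sum_nonneg) simp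
      then show ?thesis unfolding L2_set_def by (rule real_sqrt_pow2[symmetric])
    qed
    also have "\<dots> \<le> (L2_set (\<lambda>z. sqrt (d z)) P + L2_set (\<lambda>z. norm (x - z)) P)^2"
      by (intro power_mono L2_set_triangle_ineq L2_set_nonneg)
    also have "L2_set (\<lambda>z. sqrt (d z)) P = sqrt A" unfolding L2_set_def A_def using d0 by (simp add: d_def)
    also have "L2_set (\<lambda>z. norm (x - z)) P = sqrt (B x)" unfolding L2_set_def B_def by simp
    finally show ?thesis .
  qed
  have main: "(\<Sum>x\<in>P. d x * g x) \<le> 5 * S * A"
  proof (cases "S \<le> A")
    case True
    have pw: "d x * g x \<le> S * d x + 4 * (A / n) * (B x - S)" for x
    proof -
      have m0: "0 \<le> min A (B x) - S" using True SB[of x] by simp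
      have "n * (d x * g x) - n * S * d x \<le> n * (d x * min A (B x)) - n * S * d x"
        using g0 gA[of x] gB[of x] d0[of x] n by (simp add: mult_left_mono)
      also have "\<dots> = (n * d x) * (min A (B x) - S)" by (simp add: algebra_simps)
      also have "\<dots> \<le> (sqrt A + sqrt (B x))^2 * (min A (B x) - S)"
        by (rule mult_right_mono[OF nd m0])
      also have "\<dots> = (sqrt A + sqrt (B x))^2 * (min ((sqrt A)^2) ((sqrt (B x))^2) - (sqrt S)^2)"
        using A0 S0 SB[of x] by simp
      also have "\<dots> \<le> 4 * (sqrt A)^2 * ((sqrt (B x))^2 - (sqrt S)^2)"
        by (rule key_ineq) (use True SB[of x] S0 in \<open>auto simp: real_sqrt_le_iff\<close>)
      also have "\<dots> = 4 * A * (B x - S)" using A0 S0 SB[of x] by simp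
      finally have "n * (d x * g x) \<le> n * S * d x + 4 * A * (B x - S)" by simp
      also have "\<dots> = n * (S * d x + 4 * (A / n) * (B x - S))"
        using n by (simp add: field_simps)
      finally have "n * (d x * g x) \<le> n * (S * d x + 4 * (A / n) * (B x - S))" .
      then show ?thesis using n by simp
    qed
    define cst where "cst = 4 * (A / n)"
    have "(\<Sum>x\<in>P. d x * g x) \<le> (\<Sum>x\<in>P. S * d x + cst * (B x - S))"
      unfolding cst_def by (intro sum_mono pw)
    also have "\<dots> = S * (\<Sum>x\<in>P. d x) + cst * (\<Sum>x\<in>P. B x - S)"
      by (simp add: sum.distrib sum_distrib_left)
    also have "\<dots> = S * A + cst * ((\<Sum>x\<in>P. B x) - n * S)"
      by (simp add: sum_subtractf n_def A_def d_def)
    also have "\<dots> = 5 * S * A" using n unfolding sumB cst_def by (simp add: field_simps)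
    finally show ?thesis .
  next
    case False
    have "(\<Sum>x\<in>P. d x * g x) \<le> (\<Sum>x\<in>P. d x * A)"
      by (intro sum_mono mult_left_mono gA d0)
    also have "\<dots> = A * A" by (simp add: sum_distrib_right[symmetric] A_def d_def)
    also have "\<dots> \<le> 5 * S * A" using False A0 by (simp add: mult_right_mono)
    finally show ?thesis .
  qed
  also have "\<dots> \<le> 5 * (\<Sum>y\<in>P. (norm (y - c))^2) * A"
    using Sc A0 by (simp add: mult_right_mono)
  finally show ?thesis unfolding d_def g_def A_def .
qed



definition psi :: "real \<Rightarrow> real" where
  "psi t = (if t = 0 then 1 else (1 - exp (- t)) / t)"

lemma psi_mul: "psi t * t = 1 - exp (- t)"
  by (simp add: psi_def)

lemma psi_nonneg: "0 \<le> t \<Longrightarrow> 0 \<le> psi t"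
  by (auto simp: psi_def)

lemma psi_mono:
  assumes "0 \<le> s" "s \<le> t"
  shows "psi t \<le> psi s"
proof (cases "s = 0")
  case True
  then show ?thesis
  proof (cases "t = 0")
    case False
    have "1 - exp (- t) \<le> t" using exp_ge_add_one_self[of "-t"] by simp
    then have "(1 - exp (- t)) / t \<le> 1" using assms False by (simp add: divide_le_eq)
    then show ?thesis using True False by (simp add: psi_def)
  qed (simp add: True psi_def)
next
  case False
  then have s: "s > 0" "t > 0" using assms by auto
  define th where "th = s / t"
  have th: "0 \<le> th" "th \<le> 1" using s assms by (auto simp: th_def)
  have "exp ((1 - th) *\<^sub>R 0 + th *\<^sub>R (- t)) \<le> (1 - th) * exp 0 + th * exp (- t)"
    by (rule convex_onD[OF exp_convex]) (use th in auto)
  moreover have "th * t = s" using s by (simp add: th_def)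
  ultimately have "exp (- s) \<le> (1 - th) + th * exp (- t)" by (simp add: algebra_simps)
  then have "s / t * (1 - exp (- t)) \<le> 1 - exp (- s)" by (simp add: th_def algebra_simps)
  then have "(1 - exp (- t)) / t \<le> (1 - exp (- s)) / s" using s by (simp add: field_simps)
  then show ?thesis using s by (simp add: psi_def)
qed

lemma finite_set_Pi_pmf:
  assumes "finite A"
  shows "finite (set_pmf (Pi_pmf A (False::bool) q))"
proof -
  have "set_pmf (Pi_pmf A False q) \<subseteq> PiE_dflt A False (\<lambda>_. UNIV)"
    using set_Pi_pmf_subset[OF assms, of False q] by (auto simp: PiE_dflt_def)
  moreover have "finite (PiE_dflt A False (\<lambda>_::'a. UNIV :: bool set))" using assms by auto
  ultimately show ?thesis by (rule finite_subset)
qed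

lemma Pi_split:
  fixes H :: "('a \<Rightarrow> bool) \<Rightarrow> real"
  assumes X: "finite X" "a \<in> X" and q: "0 \<le> q a" "q a \<le> 1"
  shows "measure_pmf.expectation (Pi_pmf X False (\<lambda>x. bernoulli_pmf (q x))) H
       = q a * measure_pmf.expectation (Pi_pmf (X - {a}) False (\<lambda>x. bernoulli_pmf (q x))) (\<lambda>f. H (f(a := True)))
       + (1 - q a) * measure_pmf.expectation (Pi_pmf (X - {a}) False (\<lambda>x. bernoulli_pmf (q x))) (\<lambda>f. H (f(a := False)))"
proof -
  let ?B = "Pi_pmf (X - {a}) False (\<lambda>x. bernoulli_pmf (q x))"
  have XX: "X = insert a (X - {a})" using X by auto
  have "Pi_pmf X False (\<lambda>x. bernoulli_pmf (q x)) = Pi_pmf (insert a (X - {a})) False (\<lambda>x. bernoulli_pmf (q x))"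
    using XX by simp
  also have "\<dots> = bind_pmf (bernoulli_pmf (q a)) (\<lambda>y. map_pmf (\<lambda>f. f(a := y)) ?B)"
    by (subst Pi_pmf_insert') (use X in \<open>auto simp: map_pmf_def\<close>)
  finally have eq: "Pi_pmf X False (\<lambda>x. bernoulli_pmf (q x)) = bind_pmf (bernoulli_pmf (q a)) (\<lambda>y. map_pmf (\<lambda>f. f(a := y)) ?B)" .
  have fin: "finite (set_pmf (map_pmf (\<lambda>f. f(a := y)) ?B))" for y
    using finite_set_Pi_pmf[of "X - {a}"] X by simp
  show ?thesis unfolding eq
    by (subst pmf_expectation_bind[of UNIV]) (use fin q in \<open>auto simp: UNIV_bool\<close>)
qed



lemma Min_insert_le: "finite Z \<Longrightarrow> Min (insert v Z) \<le> v"
  by simp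

lemma minlemma:
  fixes g lam p :: "'a \<Rightarrow> real"
  assumes "finite P"
  shows "finite X \<Longrightarrow> P \<subseteq> X \<Longrightarrow> (\<forall>x\<in>P. 0 \<le> g x \<and> g x \<le> V) \<Longrightarrow> (\<forall>x\<in>P. 0 \<le> lam x)
    \<Longrightarrow> (\<forall>x\<in>P. 1 - exp (- lam x) \<le> p x \<and> p x \<le> 1)
    \<Longrightarrow> measure_pmf.expectation (Pi_pmf X False (\<lambda>x. bernoulli_pmf (p x)))
          (\<lambda>f. Min (insert V (g ` {x\<in>P. f x})))
        \<le> exp (- (\<Sum>x\<in>P. lam x)) * V + psi (\<Sum>x\<in>P. lam x) * (\<Sum>x\<in>P. lam x * g x)"
  using assms
proof (induction P arbitrary: X V rule: finite_remove_induct)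
  case empty
  then show ?case by (simp add: psi_def)
next
  case (remove P)
  note fP = remove.hyps(1)
  have "Max (g ` P) \<in> g ` P" using remove.hyps(1,2) by (intro Max_in) auto
  then obtain a where a: "a \<in> P" "g a = Max (g ` P)" by (metis imageE)
  have gmax: "g x \<le> g a" if "x \<in> P" for x using a remove.hyps(1) that by simp
  define P' where "P' = P - {a}"
  have aP': "a \<notin> P'" by (simp add: P'_def)
  have fP': "finite P'" using fP by (simp add: P'_def)
  have aX: "a \<in> X" using a remove.prems by auto
  have pa: "1 - exp (- lam a) \<le> p a" using remove.prems(5) a(1) by auto
  have p0: "0 \<le> p a" using pa by (smt (verit) exp_ge_zero exp_le_one_iff remove.prems(4) a(1))
  have p1: "p a \<le> 1" using remove.prems(5) a(1) by auto
  let ?B = "Pi_pmf (X - {a}) False (\<lambda>x. bernoulli_pmf (p x))"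
  define F1 where "F1 f = Min (insert (g a) (g ` {x\<in>P'. f x}))" for f :: "'a \<Rightarrow> bool"
  define F2 where "F2 f = Min (insert V (g ` {x\<in>P'. f x}))" for f :: "'a \<Rightarrow> bool"
  have gaV: "g a \<le> V" using remove.prems(3) a(1) by auto
  have T: "Min (insert V (g ` {x\<in>P. (f(a := True)) x})) = F1 f" for f
  proof -
    have "{x\<in>P. (f(a := True)) x} = insert a {x\<in>P'. f x}" using a(1) by (auto simp: P'_def)
    then have "Min (insert V (g ` {x\<in>P. (f(a := True)) x})) = Min (insert V (insert (g a) (g ` {x\<in>P'. f x})))" by simp
    also have "\<dots> = min V (F1 f)" unfolding F1_def using fP' by (subst Min_insert) auto
    also have "\<dots> = F1 f"
    proof -
      have "F1 f \<le> g a" unfolding F1_def using fP' by (intro Min_insert_le) auto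
      then show ?thesis using gaV by simp
    qed
    finally show ?thesis .
  qed
  have F: "Min (insert V (g ` {x\<in>P. (f(a := False)) x})) = F2 f" for f
  proof -
    have "{x\<in>P. (f(a := False)) x} = {x\<in>P'. f x}" using a(1) by (auto simp: P'_def)
    then show ?thesis by (simp add: F2_def)
  qed
  define L' where "L' = (\<Sum>x\<in>P'. lam x)"
  define W' where "W' = (\<Sum>x\<in>P'. lam x * g x)"
  have sumL: "(\<Sum>x\<in>P. lam x) = lam a + L'" unfolding L'_def P'_def using fP a(1) by (simp add: sum.remove)
  have sumW: "(\<Sum>x\<in>P. lam x * g x) = lam a * g a + W'" unfolding W'_def P'_def using fP a(1) by (simp add: sum.remove)
  have lam0: "0 \<le> lam x" if "x \<in> P" for x using remove.prems(4) that by auto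
  have L'0: "0 \<le> L'" unfolding L'_def using lam0 by (auto simp: P'_def intro!: sum_nonneg)
  have la0: "0 \<le> lam a" using lam0 a(1) by auto
  have W'le: "W' \<le> L' * g a" unfolding W'_def L'_def sum_distrib_right
    using lam0 gmax by (intro sum_mono mult_left_mono) (auto simp: P'_def)
  have ga0: "0 \<le> g a" using remove.prems(3) a(1) by auto
  have IH1: "measure_pmf.expectation ?B F1 \<le> exp (- L') * g a + psi L' * W'"
    unfolding F1_def L'_def W'_def P'_def
    by (rule remove.IH[OF a(1)]) (use remove.prems gmax in \<open>auto\<close>)
  have IH2: "measure_pmf.expectation ?B F2 \<le> exp (- L') * V + psi L' * W'"
    unfolding F2_def L'_def W'_def P'_def
    by (rule remove.IH[OF a(1)]) (use remove.prems gmax in \<open>auto\<close>)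
  have "measure_pmf.expectation (Pi_pmf X False (\<lambda>x. bernoulli_pmf (p x))) (\<lambda>f. Min (insert V (g ` {x\<in>P. f x})))
      = p a * measure_pmf.expectation ?B F1 + (1 - p a) * measure_pmf.expectation ?B F2"
    by (subst Pi_split[where q=p, OF remove.prems(1) aX p0 p1]) (simp only: T F)
  also have "\<dots> \<le> p a * (exp (- L') * g a + psi L' * W') + (1 - p a) * (exp (- L') * V + psi L' * W')"
    by (intro add_mono mult_left_mono IH1 IH2) (use p0 p1 in auto)
  also have "\<dots> = psi L' * W' + exp (- L') * (V - p a * (V - g a))" by (simp add: algebra_simps)
  also have "\<dots> \<le> psi L' * W' + exp (- L') * (V - (1 - exp (- lam a)) * (V - g a))"
    using pa gaV by (intro add_left_mono mult_left_mono) (auto intro: mult_right_mono)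
  also have "\<dots> = psi L' * W' + (exp (- L') - exp (- (lam a + L'))) * g a + exp (- (lam a + L')) * V"
    by (simp add: algebra_simps exp_add[symmetric])
  also have "\<dots> \<le> exp (- (lam a + L')) * V + psi (lam a + L') * (lam a * g a + W')"
  proof -
    define L where "L = lam a + L'"
    have ps: "psi L \<le> psi L'" unfolding L_def by (rule psi_mono[OF L'0]) (use la0 in simp)
    have "(psi L' - psi L) * W' \<le> (psi L' - psi L) * (L' * g a)"
      using ps W'le by (intro mult_left_mono) auto
    also have "\<dots> = ((1 - exp (- L')) - psi L * L') * g a" proof -
      have h: "exp (- L') = 1 - psi L' * L'" using psi_mul[of L'] by simp
      show ?thesis by (simp add: h algebra_simps)
    qed
    also have "\<dots> = ((1 - exp (- L')) - (1 - exp (- L)) + psi L * lam a) * g a"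
    proof -
      have "psi L * L = 1 - exp (- L)" by (rule psi_mul)
      then have h: "psi L * L' = (1 - exp (- L)) - psi L * lam a" by (simp add: L_def algebra_simps)
      show ?thesis unfolding h by (simp add: algebra_simps)
    qed
    finally have "(psi L' - psi L) * W' \<le> (exp (- L) - exp (- L') + psi L * lam a) * g a" by (simp add: algebra_simps)
    then show ?thesis unfolding L_def[symmetric] by (simp add: algebra_simps)
  qed
  finally show ?case unfolding sumL sumW .
qed



lemma texp_le: "(t::real) * exp (- t) \<le> exp (- 1)"
proof -
  have "t \<le> exp (t - 1)" using exp_ge_add_one_self[of "t - 1"] by simp
  then have "t * exp (- t) \<le> exp (t - 1) * exp (- t)" by (intro mult_right_mono) auto
  also have "\<dots> = exp (- 1)" by (simp add: exp_add[symmetric])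
  finally show ?thesis .
qed

lemma setcost_nonneg: "finite C \<Longrightarrow> C \<noteq> {} \<Longrightarrow> 0 \<le> setcost Y C"
  unfolding setcost_def by (intro sum_nonneg pcost_nonneg) auto

lemma pcost_union_le:
  assumes "finite C" "C \<noteq> {}" "finite S" "x \<in> S"
  shows "pcost y (C \<union> S) \<le> min (pcost y C) ((norm (y - x))^2)"
  using pcost_mono[of "C \<union> S" C y] pcost_le[of "C \<union> S" x y] assms by auto

lemma cluster_bound:
  fixes X P C :: "'a::euclidean_space set"
  assumes X: "finite X" and PX: "P \<subseteq> X" and C: "finite C" "C \<noteq> {}" and l: "l > 0"
  defines "\<phi> \<equiv> setcost X C"
  shows "measure_pmf.expectation (Pi_pmf X False (\<lambda>x. bernoulli_pmf (min 1 (l * pcost x C / \<phi>))))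
            (\<lambda>f. setcost P (C \<union> {x\<in>X. f x}))
         \<le> \<phi> / (exp 1 * l) + 5 * (\<Sum>y\<in>P. (norm (y - c))^2)"
proof -
  let ?M = "Pi_pmf X False (\<lambda>x. bernoulli_pmf (min 1 (l * pcost x C / \<phi>)))"
  have P: "finite P" using X PX by (rule finite_subset[rotated])
  define d where "d y = pcost y C" for y
  define \<phi>P where "\<phi>P = (\<Sum>y\<in>P. d y)"
  define g where "g x = (\<Sum>y\<in>P. min (d y) ((norm (y - x))^2))" for x
  define lam where "lam x = l * d x / \<phi>" for x
  define OP where "OP = (\<Sum>y\<in>P. (norm (y - c))^2)"
  have d0: "0 \<le> d y" for y unfolding d_def by (rule pcost_nonneg[OF C])
  have phi0: "0 \<le> \<phi>" unfolding \<phi>_def by (rule setcost_nonneg[OF C])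
  have phiP: "\<phi>P \<le> \<phi>" unfolding \<phi>P_def \<phi>_def setcost_def d_def
    using PX X d0 by (intro sum_mono2) (auto simp: d_def)
  have phiP0: "0 \<le> \<phi>P" unfolding \<phi>P_def using d0 by (simp add: sum_nonneg)
  have lam0: "0 \<le> lam x" for x unfolding lam_def using d0 phi0 l by simp
  have g0: "0 \<le> g x" for x unfolding g_def using d0 by (intro sum_nonneg) simp
  have gle: "g x \<le> \<phi>P" for x unfolding g_def \<phi>P_def by (intro sum_mono) simp
  have OP0: "0 \<le> OP" unfolding OP_def by (simp add: sum_nonneg)
  have pw: "setcost P (C \<union> {x\<in>X. f x}) \<le> Min (insert \<phi>P (g ` {x\<in>P. f x}))" for f
  proof -
    have fin: "finite (insert \<phi>P (g ` {x\<in>P. f x}))" using P by simp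
    have "setcost P (C \<union> {x\<in>X. f x}) \<le> v" if v: "v \<in> insert \<phi>P (g ` {x\<in>P. f x})" for v
    proof -
      have finS: "finite {x\<in>X. f x}" using X by simp
      show ?thesis
      proof (cases "v = \<phi>P")
        case True
        show ?thesis unfolding True \<phi>P_def setcost_def d_def
          using pcost_mono[of "C \<union> {x\<in>X. f x}" C] C finS by (intro sum_mono) auto
      next
        case False
        then obtain x where x: "x \<in> P" "f x" "v = g x" using v by auto
        have "x \<in> {x\<in>X. f x}" using x PX by auto
        then show ?thesis unfolding x(3) g_def setcost_def d_def
          using pcost_union_le[OF C finS] by (intro sum_mono) auto
      qed
    qed
    then show ?thesis using fin by (subst Min_ge_iff) auto
  qed
  have "measure_pmf.expectation ?M (\<lambda>f. setcost P (C \<union> {x\<in>X. f x}))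
      \<le> measure_pmf.expectation ?M (\<lambda>f. Min (insert \<phi>P (g ` {x\<in>P. f x})))"
    by (intro integral_mono integrable_measure_pmf_finite finite_set_Pi_pmf X pw)
  also have "\<dots> \<le> exp (- (\<Sum>x\<in>P. lam x)) * \<phi>P + psi (\<Sum>x\<in>P. lam x) * (\<Sum>x\<in>P. lam x * g x)"
  proof (rule minlemma[OF P X PX])
    show "\<forall>x\<in>P. 0 \<le> g x \<and> g x \<le> \<phi>P" using g0 gle by auto
    show "\<forall>x\<in>P. 0 \<le> lam x" using lam0 by auto
    show "\<forall>x\<in>P. 1 - exp (- lam x) \<le> min 1 (l * pcost x C / \<phi>) \<and> min 1 (l * pcost x C / \<phi>) \<le> 1"
    proof (intro ballI conjI)
      fix x
      have "1 - exp (- lam x) \<le> lam x" using exp_ge_add_one_self[of "- lam x"] by simp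
      moreover have "1 - exp (- lam x) \<le> 1" by simp
      ultimately show "1 - exp (- lam x) \<le> min 1 (l * pcost x C / \<phi>)" by (simp add: lam_def d_def)
    qed simp
  qed
  also have "\<dots> \<le> \<phi> / (exp 1 * l) + 5 * OP"
  proof (rule add_mono)
    define L where "L = (\<Sum>x\<in>P. lam x)"
    have L: "L = l / \<phi> * \<phi>P" unfolding L_def lam_def \<phi>P_def by (simp add: sum_distrib_left)
    show "exp (- (\<Sum>x\<in>P. lam x)) * \<phi>P \<le> \<phi> / (exp 1 * l)"
    proof (cases "\<phi> = 0")
      case True
      then have "\<phi>P = 0" using phiP phiP0 by simp
      then show ?thesis using True by simp
    next
      case False
      then have phipos: "\<phi> > 0" using phi0 by simp
      have "exp (- L) * \<phi>P = (\<phi> / l) * (L * exp (- L))" unfolding L using l phipos by (simp add: field_simps)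
      also have "\<dots> \<le> (\<phi> / l) * exp (- 1)" using l phipos by (intro mult_left_mono texp_le) auto
      also have "\<dots> = \<phi> / (exp 1 * l)" by (simp add: exp_minus field_simps)
      finally show ?thesis unfolding L_def .
    qed
    have W: "(\<Sum>x\<in>P. lam x * g x) = l / \<phi> * (\<Sum>x\<in>P. d x * g x)"
      unfolding lam_def by (simp add: sum_distrib_left algebra_simps)
    have F: "(\<Sum>x\<in>P. d x * g x) \<le> 5 * OP * \<phi>P"
      unfolding d_def g_def OP_def \<phi>P_def by (rule five[OF P C])
    have "psi L * (\<Sum>x\<in>P. lam x * g x) \<le> psi L * (l / \<phi> * (5 * OP * \<phi>P))"
    proof -
      have psi0: "0 \<le> psi L" unfolding L_def using lam0 by (intro psi_nonneg sum_nonneg) auto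
      have "l / \<phi> * (\<Sum>x\<in>P. d x * g x) \<le> l / \<phi> * (5 * OP * \<phi>P)"
        using F l phi0 by (intro mult_left_mono) auto
      then show ?thesis unfolding W by (rule mult_left_mono[OF _ psi0])
    qed
    also have "\<dots> = 5 * OP * (psi L * L)" unfolding L by (simp add: algebra_simps)
    also have "\<dots> = 5 * OP * (1 - exp (- L))" by (simp add: psi_mul)
    also have "\<dots> \<le> 5 * OP" using OP0 by (simp add: mult_left_le)
    finally show "psi (\<Sum>x\<in>P. lam x) * (\<Sum>x\<in>P. lam x * g x) \<le> 5 * OP" unfolding L_def .
  qed
  finally show ?thesis unfolding OP_def .
qed



lemma round_bound:
  fixes X C Cs :: "'a::euclidean_space set"
  assumes X: "finite X" and C: "finite C" "C \<noteq> {}" and Cs: "finite Cs" "Cs \<noteq> {}" and l: "l > 0"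
  shows "measure_pmf.expectation (kmpar_round l X C) (\<lambda>C'. setcost X C')
          \<le> real (card Cs) * (setcost X C / (exp 1 * l)) + 5 * setcost X Cs"
proof -
  define \<phi> where "\<phi> = setcost X C"
  let ?M = "Pi_pmf X False (\<lambda>x. bernoulli_pmf (min 1 (l * pcost x C / \<phi>)))"
  define near where "near x = (SOME c. c \<in> Cs \<and> pcost x Cs = (norm (x - c))^2)" for x
  have near: "near x \<in> Cs \<and> pcost x Cs = (norm (x - near x))^2" for x
    unfolding near_def by (rule someI_ex) (use pcost_ex[OF Cs] in auto)
  have nearX: "near ` X \<subseteq> Cs" using near by auto
  have E: "measure_pmf.expectation (kmpar_round l X C) (\<lambda>C'. setcost X C')
      = measure_pmf.expectation ?M (\<lambda>f. setcost X (C \<union> {x\<in>X. f x}))"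
    unfolding kmpar_round_def \<phi>_def by simp
  have split: "setcost X D = (\<Sum>c\<in>Cs. setcost {x\<in>X. near x = c} D)" for D
    unfolding setcost_def using sum.group[OF X Cs(1) nearX, of "\<lambda>x. pcost x D"] by simp
  have "measure_pmf.expectation ?M (\<lambda>f. setcost X (C \<union> {x\<in>X. f x}))
      = measure_pmf.expectation ?M (\<lambda>f. \<Sum>c\<in>Cs. setcost {x\<in>X. near x = c} (C \<union> {x\<in>X. f x}))"
    by (simp only: split)
  also have "\<dots> = (\<Sum>c\<in>Cs. measure_pmf.expectation ?M (\<lambda>f. setcost {x\<in>X. near x = c} (C \<union> {x\<in>X. f x})))"
    by (subst Bochner_Integration.integral_sum) (auto intro!: integrable_measure_pmf_finite finite_set_Pi_pmf X)

  also have "\<dots> \<le> (\<Sum>c\<in>Cs. \<phi> / (exp 1 * l) + 5 * (\<Sum>y\<in>{x\<in>X. near x = c}. (norm (y - c))^2))"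
    unfolding \<phi>_def by (intro sum_mono cluster_bound X C l) auto
  also have "\<dots> = real (card Cs) * (\<phi> / (exp 1 * l)) + 5 * (\<Sum>c\<in>Cs. \<Sum>y\<in>{x\<in>X. near x = c}. (norm (y - c))^2)"
    by (simp add: sum.distrib sum_distrib_left)
  also have "(\<Sum>c\<in>Cs. \<Sum>y\<in>{x\<in>X. near x = c}. (norm (y - c))^2) = setcost X Cs"
  proof -
    have "(\<Sum>c\<in>Cs. \<Sum>y\<in>{x\<in>X. near x = c}. (norm (y - c))^2) = (\<Sum>c\<in>Cs. \<Sum>y\<in>{x\<in>X. near x = c}. pcost y Cs)"
      using near by (intro sum.cong refl) auto
    also have "\<dots> = setcost X Cs" unfolding setcost_def using sum.group[OF X Cs(1) nearX, of "\<lambda>x. pcost x Cs"] by simp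
    finally show ?thesis .
  qed
  finally show ?thesis unfolding E \<phi>_def .
qed



lemma exp1_ge: "8/3 \<le> exp (1::real)"
proof -
  have "1 + 1/3 + (1/3)^2/2 \<le> exp (1/3::real)" by (rule exp_lower_Taylor_quadratic) simp
  then have "(25/18::real)^3 \<le> exp (1/3) ^ 3" by (intro power_mono) (simp_all add: power2_eq_square)
  also have "exp (1/3::real) ^ 3 = exp (of_nat 3 * (1/3))" by (rule exp_of_nat_mult[symmetric])
  finally have 1: "(25/18::real)^3 \<le> exp 1" by simp
  have "(8/3::real) \<le> (25/18)^3" by (simp add: power3_eq_cube)
  then show ?thesis using 1 by linarith
qed

lemma sq_le_2:
  fixes a b c :: "'a::euclidean_space"
  shows "(norm (a - b))^2 \<le> 2 * ((norm (a - c))^2 + (norm (b - c))^2)"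
proof -
  have "norm (a - b) \<le> norm (a - c) + norm (b - c)"
    using norm_triangle_ineq[of "a - c" "c - b"] by (simp add: norm_minus_commute)
  then have "(norm (a - b))^2 \<le> (norm (a - c) + norm (b - c))^2" by (intro power_mono) auto
  also have "\<dots> \<le> 2 * ((norm (a - c))^2 + (norm (b - c))^2)"
    using sum_squares_bound[of "norm (a - c)" "norm (b - c)"] by (simp add: algebra_simps power2_eq_square)
  finally show ?thesis .
qed

lemma opt_pos:
  fixes X :: "'a::euclidean_space set"
  assumes X: "finite X" and k: "0 < k" "k < card X"
  shows "OPT k X > 0"
proof -
  define D where "D = (\<lambda>(a, b). (norm (a - b))^2 / 4) ` {p \<in> X \<times> X. fst p \<noteq> snd p}"
  have "2 \<le> card X" using k by simp
  then obtain Y where Y: "Y \<subseteq> X" "card Y = 2" by (meson obtain_subset_with_card_n)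
  then obtain a b where ab: "a \<in> X" "b \<in> X" "a \<noteq> b" by (auto simp: card_2_iff)
  have Dfin: "finite D" unfolding D_def using X by simp
  have Dne: "D \<noteq> {}" unfolding D_def using ab by auto
  define \<delta> where "\<delta> = Min D"
  have \<delta>pos: "\<delta> > 0" unfolding \<delta>_def using Dfin Dne by (subst Min_gr_iff) (auto simp: D_def)
  define S where "S = {setcost X C | C. finite C \<and> card C = k}"
  obtain C0 where C0: "C0 \<subseteq> X" "card C0 = k" "finite C0" using k by (meson less_imp_le obtain_subset_with_card_n)
  have Sne: "S \<noteq> {}" unfolding S_def using C0 by auto
  have lb: "\<delta> \<le> s" if "s \<in> S" for s
  proof -
    obtain C where C: "finite C" "card C = k" "s = setcost X C" using \<open>s \<in> S\<close> unfolding S_def by auto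
    have Cne: "C \<noteq> {}" using C k by auto
    define near where "near x = (SOME c. c \<in> C \<and> pcost x C = (norm (x - c))^2)" for x
    have near: "near x \<in> C \<and> pcost x C = (norm (x - near x))^2" for x
      unfolding near_def by (rule someI_ex) (use pcost_ex[OF C(1) Cne] in auto)
    have "\<not> inj_on near X"
    proof
      assume "inj_on near X"
      then have "card X \<le> card C" using near C(1) by (intro card_inj_on_le) auto
      then show False using C k by simp
    qed
    then obtain x1 x2 where x: "x1 \<in> X" "x2 \<in> X" "x1 \<noteq> x2" "near x1 = near x2" by (auto simp: inj_on_def)
    have "\<delta> \<le> (norm (x1 - x2))^2 / 4" unfolding \<delta>_def using Dfin x by (intro Min_le) (auto simp: D_def)
    also have "\<dots> \<le> ((norm (x1 - near x1))^2 + (norm (x2 - near x1))^2) / 2"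
      using sq_le_2[of x1 x2 "near x1"] by simp
    also have "\<dots> \<le> (\<Sum>x\<in>{x1, x2}. pcost x C)" using near[of x1] near[of x2] x by simp
    also have "\<dots> \<le> setcost X C" unfolding setcost_def
      using x X pcost_nonneg[OF C(1) Cne] by (intro sum_mono2) auto
    finally show ?thesis using C by simp
  qed
  have "\<delta> \<le> Inf S" using Sne lb by (intro cInf_greatest) auto
  then show ?thesis using \<delta>pos unfolding OPT_def S_def by simp
qed



lemma round_fin: "finite X \<Longrightarrow> finite (set_pmf (kmpar_round l X C))"
  unfolding kmpar_round_def by (simp add: finite_set_Pi_pmf)

lemma round_support:
  "finite X \<Longrightarrow> D \<in> set_pmf (kmpar_round l X C) \<Longrightarrow> \<exists>S. S \<subseteq> X \<and> D = C \<union> S"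
  unfolding kmpar_round_def by auto

lemma seed_support:
  assumes X: "finite X" "X \<noteq> {}"
  shows "C \<in> set_pmf (kmpar_seed l X t) \<Longrightarrow> finite C \<and> C \<noteq> {} \<and> C \<subseteq> X"
proof (induction t arbitrary: C)
  case 0
  then show ?case using X by (auto simp: kmpar_init_def)
next
  case (Suc t)
  then obtain C0 where C0: "C0 \<in> set_pmf (kmpar_seed l X t)" "C \<in> set_pmf (kmpar_round l X C0)" by auto
  then obtain S where S: "S \<subseteq> X" "C = C0 \<union> S" using round_support[OF X(1)] by blast
  have "finite S" using S X finite_subset by auto
  then show ?case using Suc.IH[OF C0(1)] S by auto
qed

lemma seed_step:
  fixes X Cs :: "'a::euclidean_space set"
  assumes X: "finite X" "X \<noteq> {}" and Cs: "finite Cs" "Cs \<noteq> {}" and l: "l > 0"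
  defines "r \<equiv> real (card Cs) / (exp 1 * l)"
  shows "measure_pmf.expectation (kmpar_seed l X (Suc t)) (setcost X)
      \<le> r * measure_pmf.expectation (kmpar_seed l X t) (setcost X) + 5 * setcost X Cs"
proof -
  let ?p = "kmpar_seed l X t"
  have supp: "set_pmf ?p \<subseteq> Pow X" using seed_support[OF X] by auto
  have finP: "finite (Pow X)" using X by simp
  have "measure_pmf.expectation (kmpar_seed l X (Suc t)) (setcost X)
      = (\<Sum>a\<in>Pow X. pmf ?p a *\<^sub>R measure_pmf.expectation (kmpar_round l X a) (setcost X))"
    by (simp only: kmpar_seed.simps) (rule pmf_expectation_bind[OF finP round_fin[OF X(1)] supp])
  also have "\<dots> \<le> (\<Sum>a\<in>Pow X. pmf ?p a * (r * setcost X a + 5 * setcost X Cs))"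
  proof (intro sum_mono)
    fix a assume "a \<in> Pow X"
    show "pmf ?p a *\<^sub>R measure_pmf.expectation (kmpar_round l X a) (setcost X) \<le> pmf ?p a * (r * setcost X a + 5 * setcost X Cs)"
    proof (cases "a \<in> set_pmf ?p")
      case True
      then have a: "finite a" "a \<noteq> {}" using seed_support[OF X] by auto
      have "measure_pmf.expectation (kmpar_round l X a) (setcost X) \<le> r * setcost X a + 5 * setcost X Cs"
        using round_bound[OF X(1) a Cs l] unfolding r_def by (simp add: field_simps)
      then show ?thesis by (simp add: mult_left_mono)
    next
      case False
      then show ?thesis by (simp add: set_pmf_eq)
    qed
  qed
  also have "\<dots> = r * (\<Sum>a\<in>Pow X. setcost X a * pmf ?p a) + 5 * setcost X Cs * (\<Sum>a\<in>Pow X. pmf ?p a)"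
    by (simp add: sum.distrib sum_distrib_left algebra_simps)
  also have "(\<Sum>a\<in>Pow X. pmf ?p a) = 1" by (rule sum_pmf_eq_1[OF finP supp])
  also have "(\<Sum>a\<in>Pow X. setcost X a * pmf ?p a) = measure_pmf.expectation ?p (setcost X)"
    by (rule integral_measure_pmf_real[symmetric]) (use finP supp in auto)
  finally show ?thesis by simp
qed

lemma seed_iter:
  fixes X Cs :: "'a::euclidean_space set"
  assumes X: "finite X" "X \<noteq> {}" and Cs: "finite Cs" "Cs \<noteq> {}" and l: "l > 0"
    and r: "real (card Cs) / (exp 1 * l) < 1"
  defines "r \<equiv> real (card Cs) / (exp 1 * l)"
  shows "measure_pmf.expectation (kmpar_seed l X t) (setcost X)
      \<le> r ^ t * measure_pmf.expectation (kmpar_seed l X 0) (setcost X) + 5 * setcost X Cs / (1 - r)"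
proof (induction t)
  case 0
  have "0 \<le> 5 * setcost X Cs / (1 - r)" using setcost_nonneg[OF Cs] r unfolding r_def by simp
  then show ?case by simp
next
  case (Suc t)
  have r0: "0 \<le> r" unfolding r_def using l by simp
  have r1: "r < 1" using r unfolding r_def .
  have "measure_pmf.expectation (kmpar_seed l X (Suc t)) (setcost X)
      \<le> r * measure_pmf.expectation (kmpar_seed l X t) (setcost X) + 5 * setcost X Cs"
    unfolding r_def by (rule seed_step[OF X Cs l])
  also have "\<dots> \<le> r * (r ^ t * measure_pmf.expectation (kmpar_seed l X 0) (setcost X) + 5 * setcost X Cs / (1 - r)) + 5 * setcost X Cs"
    using Suc r0 by (intro add_right_mono mult_left_mono) auto
  also have "\<dots> = r ^ Suc t * measure_pmf.expectation (kmpar_seed l X 0) (setcost X) + 5 * setcost X Cs / (1 - r)"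
    using r1 by (simp add: field_simps)
  finally show ?case .
qed



theorem mainTheorem12:
  fixes X :: "'a::euclidean_space set" and k T :: nat and l :: real
  assumes "finite X" and "0 < k" and "card X > k" and "l > real k" and "T \<ge> 1"
    and "real T \<ge> ln (measure_pmf.expectation (kmpar_init X) (\<lambda>C. setcost X C) / OPT k X)"
  shows "measure_pmf.expectation (kmpar_seed l X T) (\<lambda>C. setcost X C) \<le> 9 * OPT k X"
proof -
  note X = assms(1)
  have Xne: "X \<noteq> {}" using assms(3) by auto
  have l: "l > 0" using assms(2,4) by simp
  define Opt where "Opt = OPT k X"
  have Opos: "Opt > 0" unfolding Opt_def by (rule opt_pos[OF X assms(2,3)])
  define E0 where "E0 = measure_pmf.expectation (kmpar_seed l X 0) (setcost X)"
  define ET where "ET = measure_pmf.expectation (kmpar_seed l X T) (setcost X)"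
  have E0ge: "0 \<le> E0" unfolding E0_def
  proof (intro integral_nonneg_AE, unfold AE_measure_pmf_iff, intro ballI)
    fix C assume "C \<in> set_pmf (kmpar_seed l X 0)"
    then have "finite C \<and> C \<noteq> {}" using seed_support[OF X Xne] by blast
    then show "0 \<le> setcost X C" using setcost_nonneg by blast
  qed
  have e1: "exp (-1::real) \<le> 3/8"
    using exp1_ge by (simp add: exp_minus field_simps)
  have bound: "ET - exp (- real T) * E0 \<le> 8 * s" if s_in: "s \<in> {setcost X C | C. finite C \<and> card C = k}" for s
  proof -
    obtain Cs where Cs: "finite Cs" "card Cs = k" "s = setcost X Cs" using s_in by auto
    have Csne: "Cs \<noteq> {}" using Cs assms(2) by auto
    define r where "r = real (card Cs) / (exp 1 * l)"
    have r0: "0 \<le> r" unfolding r_def using l by simp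
    have rle: "r \<le> exp (-1)"
      unfolding r_def using Cs(2) assms(4) l by (simp add: exp_minus field_simps)
    have r1: "r < 1" using rle e1 by simp
    have s0: "0 \<le> s" using Cs setcost_nonneg[OF Cs(1) Csne] by simp
    have "ET \<le> r ^ T * E0 + 5 * s / (1 - r)"
      unfolding ET_def E0_def r_def Cs(3) using r1 unfolding r_def
      by (intro seed_iter[OF X Xne Cs(1) Csne l])
    also have "r ^ T * E0 \<le> exp (-1) ^ T * E0" using r0 rle E0ge by (intro mult_right_mono power_mono) auto
    also have "exp (-1) ^ T = exp (- real T)" using exp_of_nat_mult[of T "-1::real"] by simp
    also have "5 * s / (1 - r) \<le> 8 * s"
    proof -
      have "0 \<le> s * (3 - 8 * r)" using s0 rle e1 by (intro mult_nonneg_nonneg) auto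
      then have "5 * s \<le> 8 * s * (1 - r)" by (simp add: algebra_simps)
      then show ?thesis using r1 by (simp add: divide_le_eq)
    qed
    finally show ?thesis by simp
  qed
  have Sne: "{setcost X C | C. finite C \<and> card C = k} \<noteq> {}"
  proof -
    obtain C0 where "C0 \<subseteq> X" "card C0 = k" "finite C0" using assms(3) by (meson less_imp_le obtain_subset_with_card_n)
    then show ?thesis by auto
  qed
  have "(ET - exp (- real T) * E0) / 8 \<le> Opt"
    unfolding Opt_def OPT_def
  proof (rule cInf_greatest[OF Sne])
    fix x assume "x \<in> {setcost X C | C. finite C \<and> card C = k}"
    from bound[OF this] show "(ET - exp (- real T) * E0) / 8 \<le> x" by simp
  qed
  then have 1: "ET \<le> exp (- real T) * E0 + 8 * Opt" by simp
  have 2: "exp (- real T) * E0 \<le> Opt"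
  proof (cases "E0 = 0")
    case True then show ?thesis using Opos by simp
  next
    case False
    then have "E0 / Opt > 0" using E0ge Opos by simp
    moreover have "ln (E0 / Opt) \<le> real T" using assms(6) unfolding E0_def Opt_def by simp
    ultimately have "E0 / Opt \<le> exp (real T)" by (metis exp_le_cancel_iff exp_ln)
    then have "E0 \<le> exp (real T) * Opt" using Opos by (simp add: divide_le_eq)
    then show ?thesis by (simp add: exp_minus field_simps)
  qed
  show ?thesis using 1 2 unfolding ET_def Opt_def by simp
qed


end
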